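(* For all complex $x,y$ with $|xy|<1$, $$\sum_{n=0}^{\infty} n!\,R_n(y)\,x^n=e^{y}\int_0^{y}\frac{e^{-t}}{1-xt}\,dt=e^{y}\sum_{n=0}^{\infty}d_n(x)\frac{y^{n+1}}{(n+1)!},$$ where the integral is along the segment from $0$ to $y$.
   Context: For an integer $n\ge 0$ and complex $y$, $R_n(y)=e^y-1-\frac{y}{1!}-\frac{y^2}{2!}-\dots-\frac{y^n}{n!}=e^y-\sum_{k=0}^n\frac{y^k}{k!}$. The derangement polynomials are $d_n(x)=(-1)^n\sum_{k=0}^{n}\binom{n}{k}(-1)^k k!\,x^k=n!\sum_{j=0}^{n}\frac{(-1)^j}{j!}x^{n-j}$, $n\ge 0$. *)

theory Defs
  imports "HOL-Complex_Analysis.Complex_Analysis"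
begin

definition R :: "nat \<Rightarrow> complex \<Rightarrow> complex" where
  "R n y = exp y - (\<Sum>k\<le>n. y ^ k / of_nat (fact k))"

definition derangement_poly :: "nat \<Rightarrow> complex \<Rightarrow> complex" where
  "derangement_poly n x = (-1) ^ n * (\<Sum>k\<le>n. of_nat (n choose k) * (-1) ^ k * of_nat (fact k) * x ^ k)"

end

theory Submission
  imports Defs
begin

lemma pow_div_deriv:
  "((\<lambda>t::complex. t ^ Suc n / c) has_field_derivative (of_nat (Suc n) * t ^ n) / c) (at t within S)"
proof -
  have "((\<lambda>t::complex. t ^ Suc n) has_field_derivative (1 + of_nat n) * (1 * t ^ n)) (at t within S)"
    by (rule DERIV_power_Suc[OF DERIV_ident])
  then have "((\<lambda>t::complex. t ^ Suc n / c) has_field_derivative (1 + of_nat n) * (1 * t ^ n) / c) (at t within S)"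
    by (rule DERIV_cdivide)
  then show ?thesis by simp
qed

lemma P_deriv:
  "((\<lambda>t::complex. \<Sum>k\<le>n. t ^ k / of_nat (fact k)) has_field_derivative (\<Sum>k<n. t ^ k / of_nat (fact k))) (at t)"
proof (induction n)
  case 0
  then show ?case by simp
next
  case (Suc n)
  have d: "((\<lambda>t::complex. t ^ Suc n / of_nat (fact (Suc n))) has_field_derivative t ^ n / of_nat (fact n)) (at t)"
  proof -
    have "((\<lambda>t::complex. t ^ Suc n / of_nat (fact (Suc n))) has_field_derivative
       (of_nat (Suc n) * t ^ n) / of_nat (fact (Suc n))) (at t)"
      by (rule pow_div_deriv)
    moreover have "(of_nat (Suc n) * t ^ n) / of_nat (fact (Suc n)) = t ^ n / (of_nat (fact n) :: complex)"
      by (simp only: fact_Suc of_nat_mult) (simp del: of_nat_Suc)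
    ultimately show ?thesis by (simp only:)
  qed
  show ?case unfolding sum.atMost_Suc sum.lessThan_Suc using DERIV_add[OF Suc d] by simp
qed

lemma G_deriv:
  "((\<lambda>t::complex. - of_nat (fact n) * exp (- t) * (\<Sum>k\<le>n. t ^ k / of_nat (fact k)))
     has_field_derivative exp (- t) * t ^ n) (at t)"
proof -
  have e: "((\<lambda>t::complex. exp (- t)) has_field_derivative - exp (- t)) (at t)"
    by (auto intro!: derivative_eq_intros)
  have "((\<lambda>t::complex. - of_nat (fact n) * exp (- t) * (\<Sum>k\<le>n. t ^ k / of_nat (fact k)))
     has_field_derivative (- of_nat (fact n) * (- exp (- t)) * (\<Sum>k\<le>n. t ^ k / of_nat (fact k))
        + - of_nat (fact n) * exp (- t) * (\<Sum>k<n. t ^ k / of_nat (fact k)))) (at t)"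
    using DERIV_mult[OF DERIV_cmult[OF e, of "- of_nat (fact n)"] P_deriv[of n t]] by (simp add: algebra_simps)
  moreover have "(\<Sum>k\<le>n. t ^ k / of_nat (fact k)) = (\<Sum>k<n. t ^ k / of_nat (fact k)) + t^n / of_nat (fact n)"
    by (simp add: lessThan_Suc_atMost[symmetric])
  ultimately show ?thesis by (simp add: algebra_simps)
qed

lemma int1: "((\<lambda>t. exp (- t) * t ^ n) has_contour_integral (of_nat (fact n) * exp (- y) * R n y)) (linepath 0 y)"
proof -
  define G where "G = (\<lambda>t::complex. - of_nat (fact n) * exp (- t) * (\<Sum>k\<le>n. t ^ k / of_nat (fact k)))"
  have "((\<lambda>t. exp (- t) * t ^ n) has_contour_integral
     (G (pathfinish (linepath 0 y)) - G (pathstart (linepath 0 y)))) (linepath 0 y)"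
  proof (rule contour_integral_primitive[of UNIV])
    fix t :: complex
    show "(G has_field_derivative exp (- t) * t ^ n) (at t within UNIV)"
      unfolding G_def by (rule G_deriv)
  qed (rule valid_path_linepath, simp)
  then have "((\<lambda>t. exp (- t) * t ^ n) has_contour_integral (G y - G 0)) (linepath 0 y)" by simp
  moreover have "(\<Sum>k\<le>n. (0::complex) ^ k / of_nat (fact k)) = 1"
    by (simp add: zero_power sum.atMost_shift)
  ultimately show ?thesis
    by (simp add: G_def R_def algebra_simps exp_minus field_simps)
qed

lemma int2: "((\<lambda>t. t ^ n) has_contour_integral (y ^ Suc n / of_nat (Suc n))) (linepath 0 y)"
proof -
  define G where "G = (\<lambda>t::complex. t ^ Suc n / of_nat (Suc n))"
  have "((\<lambda>t. t ^ n) has_contour_integral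
     (G (pathfinish (linepath 0 y)) - G (pathstart (linepath 0 y)))) (linepath 0 y)"
  proof (rule contour_integral_primitive[of UNIV])
    fix t :: complex
    have "(G has_field_derivative (of_nat (Suc n) * t ^ n) / of_nat (Suc n)) (at t)"
      unfolding G_def by (rule pow_div_deriv)
    moreover have "(of_nat (Suc n) * t ^ n) / of_nat (Suc n) = t ^ n"
      by (simp del: of_nat_Suc)
    ultimately show "(G has_field_derivative t ^ n) (at t within UNIV)"
      by (simp only:)
  qed (rule valid_path_linepath, simp)
  then show ?thesis by (simp add: G_def)
qed

lemma dpoly: "derangement_poly m x / of_nat (fact m) = (\<Sum>j\<le>m. (-1)^j / of_nat (fact j) * x^(m-j))"
proof -
  have "derangement_poly m x / of_nat (fact m) =
     (\<Sum>k\<le>m. (-1)^m * of_nat (m choose k) * (-1) ^ k * of_nat (fact k) * x ^ k / of_nat (fact m))"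
    by (simp add: derangement_poly_def sum_distrib_left sum_divide_distrib algebra_simps)
  also have "\<dots> = (\<Sum>k\<le>m. (-1)^(m-k) / of_nat (fact (m-k)) * x^k)"
  proof (rule sum.cong[OF refl])
    fix k assume "k \<in> {..m}"
    then obtain d where m: "m = k + d" by (auto simp: le_iff_add)
    have b0: "fact k * fact d * (m choose k) = fact m"
      using binomial_fact_lemma[of k m] m by simp
    have b: "of_nat (fact k) * of_nat (m choose k) / of_nat (fact m) = (1 / of_nat (fact d) :: complex)"
    proof -
      have "(of_nat (fact k) * of_nat (fact d) * of_nat (m choose k) :: complex) = of_nat (fact m)"
        using arg_cong[OF b0, of "of_nat :: nat \<Rightarrow> complex"] by (simp only: of_nat_mult)
      then show ?thesis by (simp add: field_simps)
    qed
    have "(-1::complex)^m * (-1)^k = (-1)^d" unfolding m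
      by (simp add: power_add)
    then show "(-1)^m * of_nat (m choose k) * (-1) ^ k * of_nat (fact k) * x ^ k / of_nat (fact m) =
         (-1)^(m-k) / of_nat (fact (m-k)) * (x::complex)^k"
    proof -
      have "(-1)^m * of_nat (m choose k) * (-1) ^ k * of_nat (fact k) * x ^ k / of_nat (fact m)
         = ((-1::complex)^m * (-1)^k) * (of_nat (fact k) * of_nat (m choose k) / of_nat (fact m)) * x ^ k"
        by (simp add: algebra_simps)
      also have "\<dots> = (-1)^(m-k) / of_nat (fact (m-k)) * x^k"
        using m b \<open>(-1::complex)^m * (-1)^k = (-1)^d\<close> by simp
      finally show ?thesis .
    qed
  qed
  also have "\<dots> = (\<Sum>j\<le>m. (-1)^j / of_nat (fact j) * x^(m-j))"
    by (rule sum.reindex_bij_witness[of _ "\<lambda>j. m - j" "\<lambda>j. m - j"]) auto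
  finally show ?thesis .
qed

lemma series_integral:
  fixes g :: "nat \<Rightarrow> complex \<Rightarrow> complex" and M :: "nat \<Rightarrow> real"
  assumes J: "\<And>n. (g n has_contour_integral J n) (linepath a b)"
    and bd: "\<And>n t. t \<in> closed_segment a b \<Longrightarrow> norm (g n t) \<le> M n" and sM: "summable M"
    and sf: "\<And>t. t \<in> closed_segment a b \<Longrightarrow> (\<lambda>n. g n t) sums f t"
  shows "J sums contour_integral (linepath a b) f \<and> f contour_integrable_on linepath a b"
proof -
  have ul: "uniform_limit (path_image (linepath a b)) (\<lambda>n x. \<Sum>i<n. g i x) (\<lambda>x. suminf (\<lambda>i. g i x)) sequentially"
    using bd sM by (intro Weierstrass_m_test) auto
  have int: "\<And>n. ((\<lambda>x. \<Sum>i<n. g i x) has_contour_integral (\<Sum>i<n. J i)) (linepath a b)"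
    by (rule has_contour_integral_sum) (auto intro: J)
  have ev: "\<forall>\<^sub>F n in sequentially. (\<lambda>x. \<Sum>i<n. g i x) contour_integrable_on linepath a b"
    using int by (intro always_eventually) (auto simp: contour_integrable_on_def)
  note L = contour_integral_uniform_limit[OF ev ul, of "norm (b - a)"]
  have eq: "\<And>x. x \<in> path_image (linepath a b) \<Longrightarrow> suminf (\<lambda>i. g i x) = f x"
    using sf by (simp add: sums_iff)
  have L1: "(\<lambda>x. suminf (\<lambda>i. g i x)) contour_integrable_on linepath a b" using L by simp
  have L2: "(\<lambda>n. \<Sum>i<n. J i) \<longlonglongrightarrow> contour_integral (linepath a b) f"
  proof -
    have "contour_integral (linepath a b) (\<lambda>x. suminf (\<lambda>i. g i x)) = contour_integral (linepath a b) f"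
      by (rule contour_integral_eq) (rule eq)
    then show ?thesis using L(2) contour_integral_unique[OF int] by simp
  qed
  show ?thesis using L2 contour_integrable_eq[OF L1 eq] by (simp add: sums_def)
qed

lemma exp_sums_c: "(\<lambda>j. z ^ j / of_nat (fact j)) sums exp (z::complex)"
proof -
  have "(\<lambda>j. z ^ j /\<^sub>R fact j) = (\<lambda>j. z ^ j / of_nat (fact j))"
    by (auto simp: scaleR_conv_of_real field_simps)
  then show ?thesis using exp_converges[of z] by simp
qed

lemma cauchy_term:
  "derangement_poly m x / of_nat (fact m) * t ^ m
     = (\<Sum>j\<le>m. ((- t) ^ j / of_nat (fact j)) * ((x * t) ^ (m - j)))"
proof -
  have "derangement_poly m x / of_nat (fact m) * t ^ m
     = (\<Sum>j\<le>m. (-1)^j / of_nat (fact j) * x^(m-j) * t ^ m)"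
    by (subst dpoly) (simp add: sum_distrib_right)
  also have "\<dots> = (\<Sum>j\<le>m. ((- t) ^ j / of_nat (fact j)) * ((x * t) ^ (m - j)))"
  proof (rule sum.cong[OF refl])
    fix j assume "j \<in> {..m}"
    then have "t ^ m = t ^ j * t ^ (m - j)" by (simp add: power_add[symmetric])
    then show "(-1)^j / of_nat (fact j) * x^(m-j) * t ^ m = ((- t) ^ j / of_nat (fact j)) * ((x * t) ^ (m - j))"
      by (simp add: power_minus' power_mult_distrib field_simps)
  qed
  finally show ?thesis .
qed

theorem mainTheorem12:
  fixes x y :: complex
  assumes "norm (x * y) < 1"
  shows "\<exists>I. ((\<lambda>t. exp (- t) / (1 - x * t)) has_contour_integral I) (linepath 0 y)
           \<and> (\<lambda>n. of_nat (fact n) * R n y * x ^ n) sums (exp y * I)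
           \<and> (\<lambda>n. derangement_poly n x * y ^ (n + 1) / of_nat (fact (n + 1))) sums I"
proof -
  define r where "r = norm (x * y)"
  have r0: "0 \<le> r" and r1: "r < 1" using assms by (auto simp: r_def)
  define f where "f = (\<lambda>t. exp (- t) / (1 - x * t))"
  have tle: "norm t \<le> norm y" if "t \<in> closed_segment 0 y" for t
    using segment_bound1[OF that] by simp
  have xtle: "norm (x * t) \<le> r" if "t \<in> closed_segment 0 y" for t
    using tle[OF that] by (auto simp: r_def norm_mult intro: mult_left_mono)
  have expb: "norm (exp (- t)) \<le> exp (norm y)" if "t \<in> closed_segment 0 y" for t
  proof -
    have "norm (exp (- t)) = exp (Re (- t))" by (simp add: norm_exp_eq_Re)
    also have "\<dots> \<le> exp (norm t)" using abs_Re_le_cmod[of "-t"] by auto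
    also have "\<dots> \<le> exp (norm y)" using tle[OF that] by simp
    finally show ?thesis .
  qed
  have geo: "(\<lambda>n. (x * t) ^ n) sums (1 / (1 - x * t))" if "t \<in> closed_segment 0 y" for t
    using geometric_sums[of "x * t"] xtle[OF that] r1 by simp
  define J1 where "J1 = (\<lambda>n. x ^ n * (of_nat (fact n) * exp (- y) * R n y))"
  have S1: "J1 sums contour_integral (linepath 0 y) f \<and> f contour_integrable_on linepath 0 y"
  proof (rule series_integral[where g = "\<lambda>n t. x ^ n * (exp (- t) * t ^ n)" and M = "\<lambda>n. exp (norm y) * r ^ n"])
    fix n show "((\<lambda>t. x ^ n * (exp (- t) * t ^ n)) has_contour_integral J1 n) (linepath 0 y)"
      unfolding J1_def by (rule has_contour_integral_lmul[OF int1])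
  next
    fix n t assume t: "t \<in> closed_segment 0 y"
    have "norm (x ^ n * (exp (- t) * t ^ n)) = norm (exp (- t)) * norm (x * t) ^ n"
      by (simp add: norm_mult norm_power power_mult_distrib)
    also have "\<dots> \<le> exp (norm y) * r ^ n"
      using expb[OF t] xtle[OF t] by (intro mult_mono power_mono) auto
    finally show "norm (x ^ n * (exp (- t) * t ^ n)) \<le> exp (norm y) * r ^ n" .
  next
    show "summable (\<lambda>n. exp (norm y) * r ^ n)"
      using r0 r1 by (intro summable_mult summable_geometric) auto
  next
    fix t assume t: "t \<in> closed_segment 0 y"
    have "(\<lambda>n. exp (- t) * (x * t) ^ n) sums (exp (- t) * (1 / (1 - x * t)))"
      by (rule sums_mult[OF geo[OF t]])
    then show "(\<lambda>n. x ^ n * (exp (- t) * t ^ n)) sums f t"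
      by (simp add: f_def power_mult_distrib mult_ac)
  qed
  define J2 where "J2 = (\<lambda>m. derangement_poly m x * y ^ (m + 1) / of_nat (fact (m + 1)))"
  have S2: "J2 sums contour_integral (linepath 0 y) f"
  proof (rule series_integral[where g = "\<lambda>m t. derangement_poly m x / of_nat (fact m) * t ^ m"
        and M = "\<lambda>m. \<Sum>j\<le>m. (norm y ^ j / fact j) * r ^ (m - j)", THEN conjunct1])
    fix m
    have "((\<lambda>t. derangement_poly m x / of_nat (fact m) * t ^ m) has_contour_integral
        derangement_poly m x / of_nat (fact m) * (y ^ Suc m / of_nat (Suc m))) (linepath 0 y)"
      by (rule has_contour_integral_lmul[OF int2])
    moreover have "derangement_poly m x / of_nat (fact m) * (y ^ Suc m / of_nat (Suc m)) = J2 m"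
      by (simp add: J2_def field_simps)
    ultimately show "((\<lambda>t. derangement_poly m x / of_nat (fact m) * t ^ m) has_contour_integral J2 m) (linepath 0 y)"
      by simp
  next
    fix m t assume t: "t \<in> closed_segment 0 y"
    have "norm (derangement_poly m x / of_nat (fact m) * t ^ m)
        = norm (\<Sum>j\<le>m. ((- t) ^ j / of_nat (fact j)) * ((x * t) ^ (m - j)))"
      by (simp only: cauchy_term)
    also have "\<dots> \<le> (\<Sum>j\<le>m. (norm y ^ j / fact j) * r ^ (m - j))"
    proof (rule sum_norm_le)
      fix j
      have "norm (((- t) ^ j / of_nat (fact j)) * ((x * t) ^ (m - j)))
          = (norm t ^ j / fact j) * norm (x * t) ^ (m - j)"
        by (simp add: norm_mult norm_divide norm_power)
      also have "\<dots> \<le> (norm y ^ j / fact j) * r ^ (m - j)"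
        using tle[OF t] xtle[OF t]
        by (intro mult_mono power_mono divide_right_mono) auto
      finally show "norm (((- t) ^ j / of_nat (fact j)) * ((x * t) ^ (m - j))) \<le> (norm y ^ j / fact j) * r ^ (m - j)" .
    qed
    finally show "norm (derangement_poly m x / of_nat (fact m) * t ^ m) \<le> (\<Sum>j\<le>m. (norm y ^ j / fact j) * r ^ (m - j))" .
  next
    have a: "summable (\<lambda>j. norm (norm y ^ j / fact j))"
      using summable_exp[of "norm y"] by (simp add: field_simps)
    have b: "summable (\<lambda>j. norm (r ^ j))"
      using r0 r1 by (simp add: summable_geometric)
    show "summable (\<lambda>m. \<Sum>j\<le>m. (norm y ^ j / fact j) * r ^ (m - j))"
      by (rule summable_Cauchy_product[OF a b])
  next
    fix t assume t: "t \<in> closed_segment 0 y"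
    have a: "summable (\<lambda>j. norm ((- t) ^ j / of_nat (fact j)))"
      using summable_exp[of "norm t"] by (simp add: norm_divide norm_power field_simps)
    have b: "summable (\<lambda>j. norm ((x * t) ^ j))"
      using xtle[OF t] r1 by (simp add: norm_power summable_geometric)
    have "(\<lambda>m. \<Sum>j\<le>m. ((- t) ^ j / of_nat (fact j)) * ((x * t) ^ (m - j)))
        sums ((\<Sum>j. (- t) ^ j / of_nat (fact j)) * (\<Sum>j. (x * t) ^ j))"
      by (rule Cauchy_product_sums[OF a b])
    moreover have "(\<Sum>j. (- t) ^ j / of_nat (fact j)) = exp (- t)"
      using exp_sums_c by (simp add: sums_iff)
    moreover have "(\<Sum>j. (x * t) ^ j) = 1 / (1 - x * t)"
      using geo[OF t] by (simp add: sums_iff)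
    ultimately have "(\<lambda>m. \<Sum>j\<le>m. ((- t) ^ j / of_nat (fact j)) * ((x * t) ^ (m - j))) sums f t"
      by (simp add: f_def)
    then show "(\<lambda>m. derangement_poly m x / of_nat (fact m) * t ^ m) sums f t"
      by (simp only: cauchy_term)
  qed
  define I where "I = contour_integral (linepath 0 y) f"
  have HI: "(f has_contour_integral I) (linepath 0 y)"
    using S1 by (simp add: I_def has_contour_integral_integral)
  have "(\<lambda>n. exp y * J1 n) sums (exp y * I)"
    using S1 by (intro sums_mult) (simp add: I_def)
  moreover have "(\<lambda>n. exp y * J1 n) = (\<lambda>n. of_nat (fact n) * R n y * x ^ n)"
    by (auto simp: J1_def exp_minus field_simps)
  ultimately show ?thesis using HI S2 unfolding f_def J2_def I_def by auto
qed

end
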